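(* Let $M=\mathbb{R}/\mathbb{Z}$, let $f_0:M\to M$ be a saddle-node circle homeomorphism, let $(f_t)_{t\in[0,1]}$ be a continuous one-parameter family of circle homeomorphisms (with $f_t$ at $t=0$ equal to $f_0$), and let $(\theta_\varepsilon)_{\varepsilon>0}$ be probability measures on the parameter space $[0,1]$ with $\theta_\varepsilon\to\delta_0$ in the weak$^*$ topology as $\varepsilon\to0$. If for every $\varepsilon$ close to $0$ one chooses an $\varepsilon$-stationary probability measure $\mu^\varepsilon$, then every weak$^*$ accumulation point $\mu$ of $(\mu^\varepsilon)$ as $\varepsilon\to0$ equals the Dirac mass $\delta_0$.
   Context: A homeomorphism $f_0:M\to M$ is a saddle-node circle homeomorphism if $f_0(0)=0$, $f_0(x)\neq x$ for all $x\neq0$, and $f_0(x)>x$ for all $x\in V\setminus\{0\}$ for some open neighborhood $V$ of $0$. A probability measure $\mu$ on $M$ is $\varepsilon$-stationary if $\int\varphi\,d\mu=\iint\varphi(f_t(x))\,d\mu(x)\,d\theta_\varepsilon(t)$ for every continuous $\varphi:M\to\mathbb{R}$. *)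

theory Defs
  imports "HOL-Analysis.Analysis" "HOL-Probability.Probability"
begin

text \<open>The circle M = R/Z is modelled as the unit circle of the complex plane,
  via the homeomorphism [s] \<mapsto> exp(2 pi i s); the point 0 of R/Z is the point 1.\<close>

abbreviation circle :: "complex set" where
  "circle \<equiv> sphere 0 1"

abbreviation circle_borel :: "complex measure" where
  "circle_borel \<equiv> restrict_space borel circle"

abbreviation param_borel :: "real measure" where
  "param_borel \<equiv> restrict_space borel {0..1}"

definition circle_homeo :: "(complex \<Rightarrow> complex) \<Rightarrow> bool" where
  "circle_homeo f \<longleftrightarrow> (\<exists>g. homeomorphism circle circle f g)"

text \<open>For points x close to 1 and y close to x, "y > x" on R/Z means that
  the small representative of y - x is positive, i.e. Arg (y / x) > 0.\<close>
definition saddle_node :: "(complex \<Rightarrow> complex) \<Rightarrow> bool" where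
  "saddle_node f0 \<longleftrightarrow> circle_homeo f0 \<and> f0 1 = 1 \<and>
     (\<forall>x\<in>circle. x \<noteq> 1 \<longrightarrow> f0 x \<noteq> x) \<and>
     (\<exists>V. open V \<and> 1 \<in> V \<and> (\<forall>x\<in>V \<inter> circle. x \<noteq> 1 \<longrightarrow> Arg (f0 x / x) > 0))"

definition prob_on_circle :: "complex measure \<Rightarrow> bool" where
  "prob_on_circle \<mu> \<longleftrightarrow> prob_space \<mu> \<and> sets \<mu> = sets circle_borel"

definition prob_on_param :: "real measure \<Rightarrow> bool" where
  "prob_on_param \<theta> \<longleftrightarrow> prob_space \<theta> \<and> sets \<theta> = sets param_borel"

definition stationary :: "(real \<Rightarrow> complex \<Rightarrow> complex) \<Rightarrow> real measure \<Rightarrow> complex measure \<Rightarrow> bool" where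
  "stationary f \<theta> \<mu> \<longleftrightarrow>
     (\<forall>\<phi> :: complex \<Rightarrow> real. continuous_on circle \<phi> \<longrightarrow>
        (\<integral>x. \<phi> x \<partial>\<mu>) = (\<integral>t. (\<integral>x. \<phi> (f t x) \<partial>\<mu>) \<partial>\<theta>))"

definition weak_star_conv :: "(nat \<Rightarrow> complex measure) \<Rightarrow> complex measure \<Rightarrow> bool" where
  "weak_star_conv \<mu>s \<nu> \<longleftrightarrow>
     (\<forall>\<phi> :: complex \<Rightarrow> real. continuous_on circle \<phi> \<longrightarrow>
        (\<lambda>n. \<integral>x. \<phi> x \<partial>(\<mu>s n)) \<longlonglongrightarrow> (\<integral>x. \<phi> x \<partial>\<nu>))"

end

theory Submission
  imports Defs
begin

lemma C1_facts:
  fixes z :: complex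
  assumes "z \<in> circle" "z \<noteq> 1"
  shows "z \<notin> \<real>\<^sub>\<ge>\<^sub>0" "0 < Arg2pi z" "Arg2pi z < 2*pi" "exp (\<i> * of_real (Arg2pi z)) = z"
proof -
  show nr: "z \<notin> \<real>\<^sub>\<ge>\<^sub>0"
  proof
    assume "z \<in> \<real>\<^sub>\<ge>\<^sub>0"
    then obtain r where "z = of_real r" "r \<ge> 0" by (auto simp: nonneg_Reals_def)
    with assms show False by auto
  qed
  show "exp (\<i> * of_real (Arg2pi z)) = z" using assms complex_norm_eq_1_exp by auto
  show "Arg2pi z < 2*pi" using Arg2pi by blast
  have "Arg2pi z \<noteq> 0" using nr by (auto simp: Arg2pi_eq_0 complex_nonneg_Reals_iff complex_is_Real_iff)
  then show "0 < Arg2pi z" using Arg2pi[of z] by linarith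
qed

lemma P_facts:
  fixes t :: real
  assumes "0 < t" "t < 2*pi"
  shows "exp (\<i> * of_real t) \<in> circle" "exp (\<i> * of_real t) \<noteq> 1" "Arg2pi (exp (\<i> * of_real t)) = t"
proof -
  show a: "Arg2pi (exp (\<i> * of_real t)) = t" using assms by (subst Arg2pi_exp) auto
  show "exp (\<i> * of_real t) \<in> circle" by (simp add: norm_exp_i_times)
  show "exp (\<i> * of_real t) \<noteq> 1"
  proof
    assume "exp (\<i> * of_real t) = 1"
    with a have "t = Arg2pi 1" by simp
    also have "\<dots> = 0" by (simp add: Arg2pi_eq_0)
    finally show False using assms by simp
  qed
qed

lemma orbit_conv:
  fixes g :: "complex \<Rightarrow> complex"
  assumes cont: "continuous_on circle g" and maps: "g ` circle \<subseteq> circle"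
    and inj: "inj_on g circle" and fix1: "g 1 = 1"
    and nofix: "\<forall>x\<in>circle. x \<noteq> 1 \<longrightarrow> g x \<noteq> x"
    and x: "x \<in> circle"
  shows "(\<lambda>n. (g^^n) x) \<longlonglongrightarrow> 1"
proof (cases "x = 1")
  case True
  have "(g^^n) 1 = 1" for n by (induction n) (auto simp: fix1)
  then show ?thesis using True by simp
next
  case False
  define C1 where "C1 = circle - {1}"
  define P where "P = (\<lambda>t::real. exp (\<i> * of_real t))"
  define G where "G = (\<lambda>t. Arg2pi (g (P t)))"
  have gC1: "g z \<in> C1" if "z \<in> C1" for z
  proof -
    have "z \<in> circle" using that unfolding C1_def by blast
    then have "g z \<in> circle" using maps by blast
    moreover have "g z \<noteq> 1" using inj that fix1 unfolding C1_def
      by (metis DiffD1 DiffD2 inj_on_contraD insertI1 norm_one mem_sphere_0)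
    ultimately show ?thesis unfolding C1_def by auto
  qed
  have PC1: "P t \<in> C1" "Arg2pi (P t) = t" if "0 < t" "t < 2*pi" for t
    using P_facts[OF that] unfolding C1_def P_def by auto
  have AC1: "0 < Arg2pi z" "Arg2pi z < 2*pi" "P (Arg2pi z) = z" if "z \<in> C1" for z
    using C1_facts[of z] that unfolding C1_def P_def by auto
  have Gin: "0 < G t" "G t < 2*pi" if "0 < t" "t < 2*pi" for t
    using AC1 gC1 PC1 that unfolding G_def by auto
  have Gcont: "continuous_on {0<..<2*pi} G"
  proof -
    have "continuous_on {0<..<2*pi} P" unfolding P_def by (intro continuous_intros)
    moreover have "continuous_on (P ` {0<..<2*pi}) g"
      by (rule continuous_on_subset[OF cont]) (use PC1 in \<open>auto simp: C1_def\<close>)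
    moreover have "continuous_on (g ` P ` {0<..<2*pi}) Arg2pi"
    proof (rule continuous_at_imp_continuous_on, safe)
      fix t :: real assume "t \<in> {0<..<2*pi}"
      then have "g (P t) \<in> C1" using PC1 gC1 by auto
      then show "isCont Arg2pi (g (P t))"
        using C1_facts(1)[of "g (P t)"] continuous_at_Arg2pi unfolding C1_def by auto
    qed
    ultimately have "continuous_on {0<..<2*pi} (Arg2pi \<circ> (g \<circ> P))"
      by (metis continuous_on_compose image_comp)
    then show ?thesis unfolding G_def by (simp add: o_def)
  qed
  have Gne: "G t \<noteq> t" if "0 < t" "t < 2*pi" for t
  proof
    assume "G t = t"
    then have "g (P t) = P t" using AC1[of "g (P t)"] gC1 PC1 that unfolding G_def by metis
    then show False using nofix PC1 that unfolding C1_def by auto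
  qed
  have sign: "(\<forall>t\<in>{0<..<2*pi}. G t > t) \<or> (\<forall>t\<in>{0<..<2*pi}. G t < t)"
  proof (rule ccontr)
    assume "\<not> ?thesis"
    then obtain a b where ab: "a \<in> {0<..<2*pi}" "b \<in> {0<..<2*pi}" "G a \<le> a" "G b \<ge> b"
      by (auto simp: not_less)
    have c: "continuous_on {min a b..max a b} (\<lambda>t. G t - t)"
      by (rule continuous_on_subset[of "{0<..<2*pi}"]) (use Gcont ab in \<open>auto intro!: continuous_intros\<close>)
    have "\<exists>t. min a b \<le> t \<and> t \<le> max a b \<and> G t - t = 0"
    proof (cases "a \<le> b")
      case True
      then show ?thesis using IVT'[of "\<lambda>t. G t - t" a 0 b] c ab by auto
    next
      case False
      have "\<exists>t. b \<le> t \<and> t \<le> a \<and> G t - t = 0"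
        by (rule IVT2') (use False c ab in auto)
      then show ?thesis using False by auto
    qed
    then obtain t where "min a b \<le> t" "t \<le> max a b" "G t = t" by auto
    moreover have "0 < t" "t < 2*pi" proof -
      have "0 < min a b" "max a b < 2*pi" using ab by auto
      then show "0 < t" "t < 2*pi" using \<open>min a b \<le> t\<close> \<open>t \<le> max a b\<close> by linarith+
    qed
    ultimately show False using Gne[of t] by auto
  qed
  define th where "th = (\<lambda>n. Arg2pi ((g^^n) x))"
  have orbC1: "(g^^n) x \<in> C1" for n
    by (induction n) (use False x gC1 in \<open>auto simp: C1_def\<close>)
  have thb: "0 < th n" "th n < 2*pi" for n using AC1 orbC1 unfolding th_def by auto
  have thP: "(g^^n) x = P (th n)" for n using AC1 orbC1 unfolding th_def by auto
  have thS: "th (Suc n) = G (th n)" for n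
    unfolding th_def G_def using thP[of n] by (simp add: th_def)
  have Gat: "isCont G L" if "0 < L" "L < 2*pi" for L
    using Gcont that by (simp add: continuous_on_eq_continuous_at)
  have PL: "(\<lambda>n. P (th n)) \<longlonglongrightarrow> 1" if "th \<longlonglongrightarrow> L" "L = 0 \<or> L = 2*pi" for L
  proof -
    have "(\<lambda>n. P (th n)) \<longlonglongrightarrow> P L" unfolding P_def by (intro tendsto_intros that)
    moreover have "P L = 1" using that(2) unfolding P_def by (auto simp: exp_eq_1)
    ultimately show ?thesis by simp
  qed
  from sign show ?thesis
  proof
    assume up: "\<forall>t\<in>{0<..<2*pi}. G t > t"
    have "incseq th" by (rule incseq_SucI) (use up thb thS in \<open>auto intro: less_imp_le\<close>)
    then obtain L where L: "th \<longlonglongrightarrow> L" "\<forall>i. th i \<le> L"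
    proof -
      have "\<forall>i. th i \<le> 2*pi" using thb less_imp_le by blast
      then show ?thesis using incseq_convergent[OF \<open>incseq th\<close>] that by blast
    qed
    have "L \<le> 2*pi" by (rule LIMSEQ_le_const2[OF L(1)]) (use thb in \<open>auto intro: less_imp_le\<close>)
    have "L > 0" using L(2)[rule_format, of 0] thb(1)[of 0] by linarith
    have "L = 2*pi"
    proof (rule ccontr)
      assume "L \<noteq> 2*pi"
      with \<open>L \<le> 2*pi\<close> have "L < 2*pi" by simp
      have "(\<lambda>n. G (th n)) \<longlonglongrightarrow> G L"
        using isCont_tendsto_compose[OF Gat[OF \<open>L > 0\<close> \<open>L < 2*pi\<close>] L(1)] .
      moreover have "(\<lambda>n. G (th n)) \<longlonglongrightarrow> L" using L(1) unfolding thS[symmetric]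
        by (rule LIMSEQ_Suc)
      ultimately have "G L = L" using LIMSEQ_unique by blast
      then show False using up[rule_format, of L] \<open>L > 0\<close> \<open>L < 2*pi\<close> by simp
    qed
    then show ?thesis using PL[of L] L thP by simp
  next
    assume dn: "\<forall>t\<in>{0<..<2*pi}. G t < t"
    have "decseq th" by (rule decseq_SucI) (use dn thb thS in \<open>auto intro: less_imp_le\<close>)
    then obtain L where L: "th \<longlonglongrightarrow> L" "\<forall>i. L \<le> th i"
    proof -
      have "\<forall>i. 0 \<le> th i" using thb less_imp_le by blast
      then show ?thesis using decseq_convergent[OF \<open>decseq th\<close>] that by blast
    qed
    have "L \<ge> 0" by (rule LIMSEQ_le_const[OF L(1)]) (use thb in \<open>auto intro: less_imp_le\<close>)
    have "L < 2*pi" using L(2)[rule_format, of 0] thb(2)[of 0] by linarith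
    have "L = 0"
    proof (rule ccontr)
      assume "L \<noteq> 0"
      with \<open>L \<ge> 0\<close> have "L > 0" by simp
      have "(\<lambda>n. G (th n)) \<longlonglongrightarrow> G L"
        using isCont_tendsto_compose[OF Gat[OF \<open>L > 0\<close> \<open>L < 2*pi\<close>] L(1)] .
      moreover have "(\<lambda>n. G (th n)) \<longlonglongrightarrow> L" using L(1) unfolding thS[symmetric]
        by (rule LIMSEQ_Suc)
      ultimately have "G L = L" using LIMSEQ_unique by blast
      then show False using dn[rule_format, of L] \<open>L > 0\<close> \<open>L < 2*pi\<close> by simp
    qed
    then show ?thesis using PL[of L] L thP by simp
  qed
qed

lemma circ_space: "prob_on_circle M \<Longrightarrow> space M = circle"
  unfolding prob_on_circle_def by (metis sets_eq_imp_space_eq space_restrict_space space_borel Int_UNIV_right)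

lemma circ_meas:
  fixes \<phi> :: "complex \<Rightarrow> real"
  shows "prob_on_circle M \<Longrightarrow> continuous_on circle \<phi> \<Longrightarrow> \<phi> \<in> borel_measurable M"
  unfolding prob_on_circle_def
  by (metis borel_measurable_continuous_on_restrict measurable_cong_sets)

lemma circ_bdd:
  fixes \<phi> :: "complex \<Rightarrow> real"
  assumes "continuous_on circle \<phi>"
  obtains B where "\<forall>x\<in>circle. \<bar>\<phi> x\<bar> \<le> B"
proof -
  have "compact (\<phi> ` circle)" by (rule compact_continuous_image[OF assms compact_sphere])
  then have "bounded (\<phi> ` circle)" by (rule compact_imp_bounded)
  then obtain B where "\<forall>y\<in>\<phi> ` circle. norm y \<le> B" by (auto simp: bounded_iff)
  then show ?thesis using that by auto
qed

lemma circ_int: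
  fixes \<phi> :: "complex \<Rightarrow> real"
  assumes M: "prob_on_circle M" and c: "continuous_on circle \<phi>"
  shows "integrable M \<phi>"
proof -
  obtain B where B: "\<forall>x\<in>circle. \<bar>\<phi> x\<bar> \<le> B" using circ_bdd[OF c] by blast
  interpret prob_space M using M unfolding prob_on_circle_def by blast
  show ?thesis
  proof (rule integrable_const_bound[where B=B])
    show "AE x in M. norm (\<phi> x) \<le> B" using B circ_space[OF M] by (intro AE_I2) auto
    show "\<phi> \<in> borel_measurable M" by (rule circ_meas[OF M c])
  qed
qed

lemma circ_close:
  fixes \<phi> \<psi> :: "complex \<Rightarrow> real"
  assumes M: "prob_on_circle M" and c: "continuous_on circle \<phi>" "continuous_on circle \<psi>"
    and b: "\<forall>x\<in>circle. \<bar>\<phi> x - \<psi> x\<bar> \<le> e"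
  shows "\<bar>(\<integral>x. \<phi> x \<partial>M) - (\<integral>x. \<psi> x \<partial>M)\<bar> \<le> e"
proof -
  interpret prob_space M using M unfolding prob_on_circle_def by blast
  have i: "integrable M \<phi>" "integrable M \<psi>" using circ_int M c by blast+
  have "\<bar>(\<integral>x. \<phi> x \<partial>M) - (\<integral>x. \<psi> x \<partial>M)\<bar> = \<bar>\<integral>x. \<phi> x - \<psi> x \<partial>M\<bar>"
    using i by simp
  also have "\<dots> \<le> (\<integral>x. e \<partial>M)"
    by (rule integral_abs_bound_integral) (use i b circ_space[OF M] in auto)
  also have "\<dots> = e" by (simp add: prob_space)
  finally show ?thesis .
qed

lemma ident:
  assumes nu: "prob_on_circle \<nu>"
    and h: "\<And>\<phi>::complex\<Rightarrow>real. continuous_on circle \<phi> \<Longrightarrow> (\<integral>x. \<phi> x \<partial>\<nu>) = \<phi> 1"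
  shows "\<nu> = return circle_borel 1"
proof -
  interpret prob_space \<nu> using nu unfolding prob_on_circle_def by blast
  have sp: "space \<nu> = circle" by (rule circ_space[OF nu])
  have setsI: "A \<in> sets \<nu> \<longleftrightarrow> A \<subseteq> circle \<and> A \<in> sets borel" for A
    using nu unfolding prob_on_circle_def by (simp add: sets_restrict_space_iff)
  have D: "circle - {1} \<in> sets \<nu>" using setsI by auto
  define s where "s = (\<lambda>(k::nat) (z::complex). min 1 (real k * cmod (z - 1)))"
  have sc: "continuous_on circle (s k)" for k unfolding s_def by (intro continuous_intros)
  have lim: "(\<lambda>k. \<integral>z. s k z \<partial>\<nu>) \<longlonglongrightarrow> (\<integral>z. indicator (circle - {1}) z \<partial>\<nu>)"
  proof (rule integral_dominated_convergence[where w="\<lambda>_. 1"])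
    show "indicator (circle - {1}) \<in> borel_measurable \<nu>" using D by simp
    show "s k \<in> borel_measurable \<nu>" for k using circ_meas[OF nu sc] .
    show "integrable \<nu> (\<lambda>_. 1::real)" by simp
    show "AE x in \<nu>. norm (s k x) \<le> 1" for k unfolding s_def by (intro AE_I2) auto
    show "AE x in \<nu>. (\<lambda>k. s k x) \<longlonglongrightarrow> indicator (circle - {1}) x"
    proof (intro AE_I2)
      fix x assume x: "x \<in> space \<nu>"
      show "(\<lambda>k. s k x) \<longlonglongrightarrow> indicator (circle - {1}) x"
      proof (cases "x = 1")
        case True then show ?thesis by (simp add: s_def)
      next
        case False
        have "cmod (x - 1) > 0" using False by simp
        then have "eventually (\<lambda>k. real k * cmod (x - 1) \<ge> 1) sequentially"
        proof -
          obtain n0 :: nat where n0: "1 < real n0 * cmod (x - 1)"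
            using ex_less_of_nat_mult[OF \<open>cmod (x - 1) > 0\<close>] by blast
          show ?thesis
          proof (rule eventually_sequentiallyI[of n0])
            fix k assume "n0 \<le> k"
            then have "real n0 * cmod (x - 1) \<le> real k * cmod (x - 1)"
              by (intro mult_right_mono) auto
            then show "real k * cmod (x - 1) \<ge> 1" using n0 by linarith
          qed
        qed
        then have "eventually (\<lambda>k. s k x = 1) sequentially"
          by eventually_elim (simp add: s_def)
        then have "(\<lambda>k. s k x) \<longlonglongrightarrow> 1" by (rule tendsto_eventually)
        then show ?thesis using False x sp by simp
      qed
    qed
  qed
  have "\<And>k. (\<integral>z. s k z \<partial>\<nu>) = 0" using h[OF sc] by (simp add: s_def)
  then have "(\<lambda>k. \<integral>z. s k z \<partial>\<nu>) = (\<lambda>_. 0)" by (rule ext)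
  with lim have "(\<lambda>_. 0) \<longlonglongrightarrow> measure \<nu> ((circle - {1}) \<inter> space \<nu>)" by simp
  then have "0 = measure \<nu> ((circle - {1}) \<inter> space \<nu>)" by (rule LIMSEQ_unique[OF tendsto_const])
  then have mz: "measure \<nu> (circle - {1}) = 0" using sp by (simp add: Int_absorb2)
  have m0: "measure \<nu> A = 0" if "A \<in> sets \<nu>" "1 \<notin> A" for A
  proof -
    have "A \<subseteq> circle - {1}" using sets.sets_into_space[OF that(1)] sp that(2) by blast
    then have "measure \<nu> A \<le> measure \<nu> (circle - {1})" by (rule finite_measure_mono[OF _ D])
    then show ?thesis using mz measure_nonneg[of \<nu> A] by linarith
  qed
  show ?thesis
  proof (rule measure_eqI)
    show "sets \<nu> = sets (return circle_borel 1)" using nu unfolding prob_on_circle_def by simp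
    fix A assume A: "A \<in> sets \<nu>"
    have Ab: "A \<in> sets circle_borel" using A nu unfolding prob_on_circle_def by simp
    show "emeasure \<nu> A = emeasure (return circle_borel 1) A"
    proof (cases "1 \<in> A")
      case True
      have "space \<nu> - A \<in> sets \<nu>" using A by auto
      moreover have "1 \<notin> space \<nu> - A" using True by simp
      ultimately have "measure \<nu> (space \<nu> - A) = 0" using m0 by blast
      then have "measure \<nu> A = 1" using prob_compl[OF A] by simp
      then show ?thesis using True Ab by (simp add: emeasure_eq_measure)
    next
      case False
      then show ?thesis using m0[OF A False] Ab by (simp add: emeasure_eq_measure)
    qed
  qed
qed

lemma rs_space: "sets M = sets (restrict_space borel S) \<Longrightarrow> space M = S"
  by (metis sets_eq_imp_space_eq space_restrict_space space_borel Int_UNIV_right)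

lemma cpt_int:
  fixes F :: "'a::topological_space \<Rightarrow> real"
  assumes P: "prob_space M" and s: "sets M = sets (restrict_space borel S)" and k: "compact S"
    and c: "continuous_on S F"
  shows "integrable M F"
proof -
  interpret prob_space M by fact
  have sp: "space M = S" by (rule rs_space[OF s])
  have "compact (F ` S)" by (rule compact_continuous_image[OF c k])
  then have "bounded (F ` S)" by (rule compact_imp_bounded)
  then obtain B where B: "\<forall>y\<in>F ` S. norm y \<le> B" by (auto simp: bounded_iff)
  show ?thesis
  proof (rule integrable_const_bound[where B=B])
    show "AE x in M. norm (F x) \<le> B" using B sp by (intro AE_I2) auto
    show "F \<in> borel_measurable M"
      using borel_measurable_continuous_on_restrict[OF c] measurable_cong_sets[OF s refl] by blast
  qed
qed

lemma unif:
  fixes H :: "real \<times> complex \<Rightarrow> real"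
  assumes c: "continuous_on ({0..1} \<times> circle) H" and e: "e > 0"
  shows "\<exists>d>0. \<forall>s\<in>{0..1}. \<forall>t\<in>{0..1}. \<bar>s - t\<bar> < d \<longrightarrow> (\<forall>x\<in>circle. \<bar>H (s,x) - H (t,x)\<bar> < e)"
proof -
  have "uniformly_continuous_on ({0..1} \<times> circle) H"
    by (rule compact_uniformly_continuous[OF c]) (intro compact_Times compact_Icc compact_sphere)
  then obtain d where d: "d > 0"
    "\<forall>p\<in>{0..1} \<times> circle. \<forall>q\<in>{0..1} \<times> circle. dist q p < d \<longrightarrow> dist (H q) (H p) < e"
    unfolding uniformly_continuous_on_def using e by blast
  show ?thesis
  proof (intro exI[of _ d] conjI ballI impI d(1))
    fix s t :: real and x :: complex
    assume st: "s \<in> {0..1}" "t \<in> {0..1}" "\<bar>s - t\<bar> < d" and x: "x \<in> circle"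
    have "dist (s,x) (t,x) = \<bar>s - t\<bar>" by (simp add: dist_Pair_Pair dist_real_def)
    then have "dist (H (s,x)) (H (t,x)) < e" using d(2) st x by auto
    then show "\<bar>H (s,x) - H (t,x)\<bar> < e" by (simp add: dist_real_def)
  qed
qed

lemma Hsec:
  fixes H :: "real \<times> complex \<Rightarrow> real"
  assumes c: "continuous_on ({0..1} \<times> circle) H" and t: "t \<in> {0..1}"
  shows "continuous_on circle (\<lambda>x. H (t,x))"
proof -
  have "continuous_on circle (\<lambda>x. (t,x))" by (intro continuous_intros)
  moreover have "(\<lambda>x. (t,x)) ` circle \<subseteq> {0..1} \<times> circle" using t by auto
  ultimately show ?thesis using continuous_on_compose2[OF c] by blast
qed

lemma Fcont:
  fixes H :: "real \<times> complex \<Rightarrow> real"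
  assumes M: "prob_on_circle M" and c: "continuous_on ({0..1} \<times> circle) H"
  shows "continuous_on {0..1} (\<lambda>t. \<integral>x. H (t,x) \<partial>M)"
  unfolding continuous_on_iff
proof (intro ballI allI impI)
  fix t e :: real assume t: "t \<in> {0..1}" and e: "0 < e"
  obtain d where d: "d > 0" "\<forall>s\<in>{0..1}. \<forall>t\<in>{0..1}. \<bar>s - t\<bar> < d \<longrightarrow> (\<forall>x\<in>circle. \<bar>H (s,x) - H (t,x)\<bar> < e/2)"
    using unif[OF c, of "e/2"] e by auto
  show "\<exists>d>0. \<forall>s\<in>{0..1}. dist s t < d \<longrightarrow> dist (\<integral>x. H (s,x) \<partial>M) (\<integral>x. H (t,x) \<partial>M) < e"
  proof (intro exI[of _ d] conjI ballI impI d(1))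
    fix s assume s: "s \<in> {0..1}" "dist s t < d"
    have "\<bar>(\<integral>x. H (s,x) \<partial>M) - (\<integral>x. H (t,x) \<partial>M)\<bar> \<le> e/2"
      by (rule circ_close[OF M Hsec[OF c s(1)] Hsec[OF c t]])
         (use d(2) s t in \<open>force simp: dist_real_def\<close>)
    then show "dist (\<integral>x. H (s,x) \<partial>M) (\<integral>x. H (t,x) \<partial>M) < e" using e by (simp add: dist_real_def)
  qed
qed

lemma iterate_limit:
  fixes g :: "complex \<Rightarrow> complex"
  assumes nu: "prob_on_circle \<nu>"
    and cont: "continuous_on circle g" and maps: "g ` circle \<subseteq> circle"
    and conv: "\<And>x. x \<in> circle \<Longrightarrow> (\<lambda>n. (g^^n) x) \<longlonglongrightarrow> 1"
    and inv: "\<And>\<phi>::complex\<Rightarrow>real. continuous_on circle \<phi> \<Longrightarrow> (\<integral>x. \<phi> x \<partial>\<nu>) = (\<integral>x. \<phi> (g x) \<partial>\<nu>)"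
    and phi: "continuous_on circle (\<phi>::complex\<Rightarrow>real)"
  shows "(\<integral>x. \<phi> x \<partial>\<nu>) = \<phi> 1"
proof -
  interpret prob_space \<nu> using nu unfolding prob_on_circle_def by blast
  have sp: "space \<nu> = circle" by (rule circ_space[OF nu])
  have gn: "continuous_on circle (g^^n) \<and> (g^^n) ` circle \<subseteq> circle" for n
  proof (induction n)
    case 0 then show ?case by (simp add: continuous_on_id)
  next
    case (Suc n)
    have "continuous_on circle (g \<circ> (g^^n))"
      by (rule continuous_on_compose) (use Suc cont continuous_on_subset in blast)+
    then show ?case using Suc maps by auto
  qed
  have it: "(\<integral>x. \<psi> x \<partial>\<nu>) = (\<integral>x. \<psi> ((g^^n) x) \<partial>\<nu>)" if "continuous_on circle (\<psi>::complex\<Rightarrow>real)" for n \<psi>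
    using that
  proof (induction n arbitrary: \<psi>)
    case 0 then show ?case by simp
  next
    case (Suc n)
    have c2: "continuous_on circle (\<lambda>x. \<psi> (g x))"
      using continuous_on_compose2[OF Suc.prems cont maps] .
    have "(\<integral>x. \<psi> x \<partial>\<nu>) = (\<integral>x. \<psi> (g x) \<partial>\<nu>)" by (rule inv[OF Suc.prems])
    also have "\<dots> = (\<integral>x. \<psi> (g ((g^^n) x)) \<partial>\<nu>)" by (rule Suc.IH[OF c2])
    finally show ?case by (simp add: funpow_swap1)
  qed
  obtain B where B: "\<forall>x\<in>circle. \<bar>\<phi> x\<bar> \<le> B" using circ_bdd[OF phi] by blast
  have lim: "(\<lambda>n. \<integral>x. \<phi> ((g^^n) x) \<partial>\<nu>) \<longlonglongrightarrow> (\<integral>x. \<phi> 1 \<partial>\<nu>)"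
  proof (rule integral_dominated_convergence[where w="\<lambda>_. B"])
    show "(\<lambda>x. \<phi> 1) \<in> borel_measurable \<nu>" by simp
    show "(\<lambda>x. \<phi> ((g^^n) x)) \<in> borel_measurable \<nu>" for n
      by (rule circ_meas[OF nu]) (use continuous_on_compose2[OF phi] gn in blast)
    show "integrable \<nu> (\<lambda>_. B)" by simp
    show "AE x in \<nu>. norm (\<phi> ((g^^n) x)) \<le> B" for n
    proof (intro AE_I2)
      fix x assume "x \<in> space \<nu>"
      then have "(g^^n) x \<in> circle" using gn sp by blast
      then show "norm (\<phi> ((g^^n) x)) \<le> B" using B by simp
    qed
    show "AE x in \<nu>. (\<lambda>n. \<phi> ((g^^n) x)) \<longlonglongrightarrow> \<phi> 1"
    proof (intro AE_I2)
      fix x assume "x \<in> space \<nu>"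
      then have x: "x \<in> circle" using sp by simp
      have inC: "\<And>n. (g^^n) x \<in> circle" using gn x by blast
      have c1: "continuous (at 1 within circle) \<phi>" using phi by (simp add: continuous_on_eq_continuous_within)
      show "(\<lambda>n. \<phi> ((g^^n) x)) \<longlonglongrightarrow> \<phi> 1"
        by (rule continuous_within_tendsto_compose'[OF c1 inC conv[OF x]])
    qed
  qed
  have "(\<lambda>n. \<integral>x. \<phi> ((g^^n) x) \<partial>\<nu>) = (\<lambda>_. \<integral>x. \<phi> x \<partial>\<nu>)" using it[OF phi] by auto
  with lim have "(\<lambda>_. \<integral>x. \<phi> x \<partial>\<nu>) \<longlonglongrightarrow> \<phi> 1" by (simp add: prob_space)
  then show ?thesis using LIMSEQ_unique[OF tendsto_const] by blast
qed

theorem theoremF: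
  fixes f :: "real \<Rightarrow> complex \<Rightarrow> complex"
    and \<theta> :: "real \<Rightarrow> real measure"
    and \<mu> :: "real \<Rightarrow> complex measure"
    and \<nu> :: "complex measure"
  assumes saddle: "saddle_node (f 0)"
    and homeo: "\<forall>t\<in>{0..1}. circle_homeo (f t)"
    and family_cont: "continuous_on ({0..1} \<times> circle) (\<lambda>(t, x). f t x)"
    and theta_prob: "\<forall>\<epsilon>>0. prob_on_param (\<theta> \<epsilon>)"
    and theta_conv: "\<forall>\<psi> :: real \<Rightarrow> real. continuous_on {0..1} \<psi> \<longrightarrow>
                       ((\<lambda>\<epsilon>. \<integral>t. \<psi> t \<partial>(\<theta> \<epsilon>)) \<longlongrightarrow> \<psi> 0) (at_right 0)"
    and mu_stat: "\<forall>\<^sub>F \<epsilon> in at_right 0. prob_on_circle (\<mu> \<epsilon>) \<and> stationary f (\<theta> \<epsilon>) (\<mu> \<epsilon>)"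
    and nu_prob: "prob_on_circle \<nu>"
    and acc: "\<exists>\<epsilon>s :: nat \<Rightarrow> real. (\<forall>n. \<epsilon>s n > 0) \<and> \<epsilon>s \<longlonglongrightarrow> 0 \<and>
                weak_star_conv (\<lambda>n. \<mu> (\<epsilon>s n)) \<nu>"
  shows "\<nu> = return circle_borel 1"
proof -
  define g where "g = f 0"
  obtain h where hm: "homeomorphism circle circle g h"
    using saddle unfolding saddle_node_def circle_homeo_def g_def by blast
  have gcont: "continuous_on circle g" and gmaps: "g ` circle \<subseteq> circle"
    using hm unfolding homeomorphism_def by auto
  have ginj: "inj_on g circle"
  proof (rule inj_on_inverseI[of _ h])
    fix x assume "x \<in> circle"
    then show "h (g x) = x" using hm unfolding homeomorphism_def by blast
  qed
  have g1: "g 1 = 1" unfolding g_def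
    by (rule saddle[unfolded saddle_node_def, THEN conjunct2, THEN conjunct1])
  have nofix: "\<forall>x\<in>circle. x \<noteq> 1 \<longrightarrow> g x \<noteq> x" unfolding g_def
    by (rule saddle[unfolded saddle_node_def, THEN conjunct2, THEN conjunct2, THEN conjunct1])
  have fmaps: "f t x \<in> circle" if "t \<in> {0..1}" "x \<in> circle" for t x
  proof -
    have "circle_homeo (f t)" using homeo that(1) by blast
    then obtain k where "homeomorphism circle circle (f t) k"
      unfolding circle_homeo_def by blast
    then have "f t ` circle = circle" by (rule homeomorphism_image1)
    then show ?thesis using that(2) by blast
  qed
  obtain \<epsilon>s where es: "\<forall>n. \<epsilon>s n > 0" "\<epsilon>s \<longlonglongrightarrow> 0" "weak_star_conv (\<lambda>n. \<mu> (\<epsilon>s n)) \<nu>"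
    using acc by blast
  have fl: "filterlim \<epsilon>s (at_right 0) sequentially"
    by (rule tendsto_imp_filterlim_at_right[OF es(2)]) (use es(1) in auto)
  have ev: "eventually (\<lambda>n. prob_on_circle (\<mu> (\<epsilon>s n)) \<and> stationary f (\<theta> (\<epsilon>s n)) (\<mu> (\<epsilon>s n))) sequentially"
    using filterlim_iff[THEN iffD1, OF fl, rule_format, OF mu_stat] .
  have thc: "(\<lambda>n. \<integral>t. \<psi> t \<partial>(\<theta> (\<epsilon>s n))) \<longlonglongrightarrow> \<psi> 0" if "continuous_on {0..1} (\<psi>::real\<Rightarrow>real)" for \<psi>
    using filterlim_compose[OF theta_conv[rule_format, OF that] fl] by simp
  have thp: "prob_on_param (\<theta> (\<epsilon>s n))" for n using theta_prob es(1) by auto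
  define H where "H = (\<lambda>\<phi>::complex\<Rightarrow>real. \<lambda>p::real\<times>complex. \<phi> (f (fst p) (snd p)))"
  have Hc: "continuous_on ({0..1}\<times>circle) (H \<phi>)" if "continuous_on circle \<phi>" for \<phi>
  proof -
    have "continuous_on ({0..1}\<times>circle) (\<lambda>p. f (fst p) (snd p))"
      using family_cont by (simp add: case_prod_beta)
    moreover have "(\<lambda>p. f (fst p) (snd p)) ` ({0..1}\<times>circle) \<subseteq> circle" using fmaps by auto
    ultimately show ?thesis unfolding H_def using continuous_on_compose2[OF that] by blast
  qed
  have inv: "(\<integral>x. \<phi> x \<partial>\<nu>) = (\<integral>x. \<phi> (g x) \<partial>\<nu>)" if \<phi>c: "continuous_on circle \<phi>" for \<phi> :: "complex \<Rightarrow> real"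
  proof -
    have gc: "continuous_on circle (\<lambda>x. \<phi> (g x))" using continuous_on_compose2[OF \<phi>c gcont gmaps] .
    have l1: "(\<lambda>n. \<integral>x. \<phi> x \<partial>(\<mu> (\<epsilon>s n))) \<longlonglongrightarrow> (\<integral>x. \<phi> x \<partial>\<nu>)"
      using es(3) \<phi>c unfolding weak_star_conv_def by blast
    have l2: "(\<lambda>n. \<integral>x. \<phi> (g x) \<partial>(\<mu> (\<epsilon>s n))) \<longlonglongrightarrow> (\<integral>x. \<phi> (g x) \<partial>\<nu>)"
      using es(3) gc unfolding weak_star_conv_def by blast
    have d0: "(\<lambda>n. (\<integral>x. \<phi> x \<partial>(\<mu> (\<epsilon>s n))) - (\<integral>x. \<phi> (g x) \<partial>(\<mu> (\<epsilon>s n)))) \<longlonglongrightarrow> 0"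
      unfolding tendsto_iff
    proof (intro allI impI)
      fix e :: real assume e: "e > 0"
      obtain B where B: "\<forall>x\<in>circle. \<bar>\<phi> x\<bar> \<le> B" using circ_bdd[OF \<phi>c] by blast
      have B0: "B \<ge> 0" using B[rule_format, of 1] by simp
      obtain d where d: "d > 0" "\<forall>s\<in>{0..1}. \<forall>t\<in>{0..1}. \<bar>s - t\<bar> < d \<longrightarrow> (\<forall>x\<in>circle. \<bar>H \<phi> (s,x) - H \<phi> (t,x)\<bar> < e/3)"
        using unif[OF Hc[OF \<phi>c], of "e/3"] e by auto
      define \<psi> where "\<psi> = (\<lambda>t::real. min 1 (t/d))"
      have \<psi>c: "continuous_on {0..1} \<psi>" unfolding \<psi>_def using d(1) by (intro continuous_intros) auto
      have "(\<lambda>n. \<integral>t. \<psi> t \<partial>(\<theta> (\<epsilon>s n))) \<longlonglongrightarrow> 0" using thc[OF \<psi>c] by (simp add: \<psi>_def)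
      moreover have c0: "e/(3*(2*B+1)) > 0" using e B0 by simp
      ultimately have ev2: "eventually (\<lambda>n. dist (\<integral>t. \<psi> t \<partial>(\<theta> (\<epsilon>s n))) 0 < e/(3*(2*B+1))) sequentially"
        unfolding tendsto_iff by blast
      show "eventually (\<lambda>n. dist ((\<integral>x. \<phi> x \<partial>(\<mu> (\<epsilon>s n))) - (\<integral>x. \<phi> (g x) \<partial>(\<mu> (\<epsilon>s n)))) 0 < e) sequentially"
        using ev ev2
      proof eventually_elim
        case (elim n)
        define M where "M = \<mu> (\<epsilon>s n)"
        define T where "T = \<theta> (\<epsilon>s n)"
        have M: "prob_on_circle M" and st: "stationary f T M" using elim unfolding M_def T_def by auto
        have Tp: "prob_space T" and Ts: "sets T = sets (restrict_space borel {0..1::real})"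
          using thp[of n] unfolding T_def prob_on_param_def by auto
        interpret T: prob_space T by (rule Tp)
        have Tsp: "space T = {0..1}" by (rule rs_space[OF Ts])
        define F where "F = (\<lambda>t. \<integral>x. H \<phi> (t,x) \<partial>M)"
        have Fc: "continuous_on {0..1} F" unfolding F_def by (rule Fcont[OF M Hc[OF \<phi>c]])
        have Fi: "integrable T F" by (rule cpt_int[OF Tp Ts compact_Icc Fc])
        have \<psi>i: "integrable T \<psi>" by (rule cpt_int[OF Tp Ts compact_Icc \<psi>c])
        have stq: "(\<integral>x. \<phi> x \<partial>M) = (\<integral>t. F t \<partial>T)"
          using st \<phi>c unfolding stationary_def F_def H_def by simp
        have F0: "F 0 = (\<integral>x. \<phi> (g x) \<partial>M)" by (simp add: F_def H_def g_def)
        have \<psi>0: "\<psi> t \<ge> 0" if "t \<in> {0..1}" for t using that d(1) unfolding \<psi>_def by auto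
        have bnd: "\<bar>F t - F 0\<bar> \<le> e/3 + 2*B*\<psi> t" if t: "t \<in> {0..1}" for t
          unfolding F_def
        proof (rule circ_close[OF M Hsec[OF Hc[OF \<phi>c] t] Hsec[OF Hc[OF \<phi>c]]])
          show "(0::real) \<in> {0..1}" by simp
          show "\<forall>x\<in>circle. \<bar>H \<phi> (t, x) - H \<phi> (0, x)\<bar> \<le> e/3 + 2*B*\<psi> t"
          proof
            fix x assume x: "x \<in> circle"
            show "\<bar>H \<phi> (t, x) - H \<phi> (0, x)\<bar> \<le> e/3 + 2*B*\<psi> t"
            proof (cases "t < d")
              case True
              then have "\<bar>H \<phi> (t, x) - H \<phi> (0, x)\<bar> < e/3" using d(2) t x by auto
              moreover have "2*B*\<psi> t \<ge> 0" using B0 \<psi>0[OF t] by simp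
              ultimately show ?thesis by linarith
            next
              case False
              then have "\<psi> t = 1" using d(1) unfolding \<psi>_def by auto
              moreover have "\<bar>H \<phi> (t, x)\<bar> \<le> B" "\<bar>H \<phi> (0, x)\<bar> \<le> B"
                using B fmaps[OF t x] fmaps[of 0 x] x unfolding H_def by auto
              ultimately show ?thesis using e by simp
            qed
          qed
        qed
        have "\<bar>(\<integral>t. F t \<partial>T) - F 0\<bar> = \<bar>\<integral>t. F t - F 0 \<partial>T\<bar>"
          using Fi by (simp add: T.prob_space)
        also have "\<dots> \<le> (\<integral>t. e/3 + 2*B*\<psi> t \<partial>T)"
          by (rule integral_abs_bound_integral) (use Fi \<psi>i bnd Tsp in auto)
        also have "\<dots> = e/3 + 2*B*(\<integral>t. \<psi> t \<partial>T)"
          using \<psi>i by (simp add: T.prob_space)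
        also have "\<dots> \<le> e/3 + 2*B*(e/(3*(2*B+1)))"
        proof -
          have "(\<integral>t. \<psi> t \<partial>T) \<le> e/(3*(2*B+1))" using elim unfolding T_def by (simp add: dist_real_def)
          then have "2*B*(\<integral>t. \<psi> t \<partial>T) \<le> 2*B*(e/(3*(2*B+1)))"
            using B0 by (intro mult_left_mono) auto
          then show ?thesis by linarith
        qed
        also have "\<dots> \<le> e/3 + e/3"
        proof -
          have "2*B*(e/(3*(2*B+1))) = (e/3) * (2*B/(2*B+1))" by simp
          also have "\<dots> \<le> (e/3) * 1" using e B0 by (intro mult_left_mono) auto
          finally show ?thesis by simp
        qed
        finally have "\<bar>(\<integral>t. F t \<partial>T) - F 0\<bar> \<le> 2*e/3" by simp
        then show ?case using e stq F0 unfolding M_def T_def dist_real_def by simp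
      qed
    qed
    have "(\<lambda>n. (\<integral>x. \<phi> x \<partial>(\<mu> (\<epsilon>s n))) - (\<integral>x. \<phi> (g x) \<partial>(\<mu> (\<epsilon>s n))))
          \<longlonglongrightarrow> (\<integral>x. \<phi> x \<partial>\<nu>) - (\<integral>x. \<phi> (g x) \<partial>\<nu>)" by (rule tendsto_diff[OF l1 l2])
    with d0 have "(\<integral>x. \<phi> x \<partial>\<nu>) - (\<integral>x. \<phi> (g x) \<partial>\<nu>) = 0" using LIMSEQ_unique by blast
    then show ?thesis by simp
  qed
  have conv: "(\<lambda>n. (g^^n) x) \<longlonglongrightarrow> 1" if "x \<in> circle" for x
    by (rule orbit_conv[OF gcont gmaps ginj g1 nofix that])
  show ?thesis
    by (rule ident[OF nu_prob iterate_limit[OF nu_prob gcont gmaps conv inv]])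
qed

end
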